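(* Let $G$ be a torsion-free nilpotent group with Hirsch length $h$, and let $x_1,\ldots,x_h$ be a generating set of $G$ such that every $g\in G$ can be written uniquely as $g=x_1^{\ell_1}\cdots x_h^{\ell_h}$ with $\ell_i\in\mathbb{Z}$, and $[x_i,x_j]\in\langle x_{j+1},\ldots,x_h\rangle$ whenever $1\le i<j\le h$. Suppose further that for some positive integers $q_1,\ldots,q_h$ the set $H=\{x_1^{q_1\ell_1}\cdots x_h^{q_h\ell_h}:\ell_i\in\mathbb{Z}\}$ is a subgroup of $G$. Then the set $X=\{x_1^{k_1}\cdots x_h^{k_h}:0\le k_i<q_i\}$ contains exactly one element from each left coset $gH$ of $H$ in $G$.
   Context: $[x,y]=x^{-1}y^{-1}xy$. *)

theory Defs
  imports "HOL-Algebra.Algebra"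
begin

definition gcomm :: "('a, 'b) monoid_scheme \<Rightarrow> 'a \<Rightarrow> 'a \<Rightarrow> 'a" where
  "gcomm G a b = inv\<^bsub>G\<^esub> a \<otimes>\<^bsub>G\<^esub> inv\<^bsub>G\<^esub> b \<otimes>\<^bsub>G\<^esub> a \<otimes>\<^bsub>G\<^esub> b"

fun lower_central :: "('a, 'b) monoid_scheme \<Rightarrow> nat \<Rightarrow> 'a set" where
  "lower_central G 0 = carrier G"
| "lower_central G (Suc n) =
     generate G {gcomm G a b | a b. a \<in> lower_central G n \<and> b \<in> carrier G}"

definition nilpotent_group :: "('a, 'b) monoid_scheme \<Rightarrow> bool" where
  "nilpotent_group G \<longleftrightarrow> group G \<and> (\<exists>n. lower_central G n = {\<one>\<^bsub>G\<^esub>})"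

definition torsion_free :: "('a, 'b) monoid_scheme \<Rightarrow> bool" where
  "torsion_free G \<longleftrightarrow>
     (\<forall>g\<in>carrier G. g \<noteq> \<one>\<^bsub>G\<^esub> \<longrightarrow> (\<forall>n::nat. n > 0 \<longrightarrow> g [^]\<^bsub>G\<^esub> n \<noteq> \<one>\<^bsub>G\<^esub>))"

text \<open>G has Hirsch length h: there is a subnormal series
  G = S_0 \<ge> S_1 \<ge> ... \<ge> S_n = 1 with cyclic factors, exactly h of which are infinite.
  (For polycyclic groups this number is an invariant.)\<close>
definition hirsch_length :: "('a, 'b) monoid_scheme \<Rightarrow> nat \<Rightarrow> bool" where
  "hirsch_length G h \<longleftrightarrow>
    (\<exists>(S :: nat \<Rightarrow> 'a set) n.
       S 0 = carrier G \<and> S n = {\<one>\<^bsub>G\<^esub>} \<and>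
       (\<forall>i<n. subgroup (S i) G \<and> S (Suc i) \<subseteq> S i \<and>
              normal (S (Suc i)) (G\<lparr>carrier := S i\<rparr>) \<and>
              (\<exists>a\<in>S i. \<forall>g\<in>S i. \<exists>k::int. g \<in> S (Suc i) #>\<^bsub>G\<^esub> (a [^]\<^bsub>G\<^esub> k))) \<and>
       card {i. i < n \<and> infinite (rcosets\<^bsub>G\<lparr>carrier := S i\<rparr>\<^esub> (S (Suc i)))} = h)"

fun basis_word :: "('a, 'b) monoid_scheme \<Rightarrow> (nat \<Rightarrow> 'a) \<Rightarrow> (nat \<Rightarrow> int) \<Rightarrow> nat \<Rightarrow> 'a" where
  "basis_word G x l 0 = \<one>\<^bsub>G\<^esub>"
| "basis_word G x l (Suc n) = basis_word G x l n \<otimes>\<^bsub>G\<^esub> (x (Suc n) [^]\<^bsub>G\<^esub> l (Suc n))"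

end

theory Submission
  imports Defs
begin


function tailw :: "('a,'b) monoid_scheme \<Rightarrow> (nat\<Rightarrow>'a) \<Rightarrow> (nat\<Rightarrow>int) \<Rightarrow> nat \<Rightarrow> nat \<Rightarrow> 'a" where
  "tailw G x l h j = (if h < j then \<one>\<^bsub>G\<^esub> else x j [^]\<^bsub>G\<^esub> l j \<otimes>\<^bsub>G\<^esub> tailw G x l h (Suc j))"
  by pat_completeness auto
termination by (relation "measure (\<lambda>(G,x,l,h,j). Suc h - j)") auto

declare tailw.simps[simp del]

context group begin

lemma tail_above: "h < j \<Longrightarrow> tailw G x l h j = \<one>"
  by (simp add: tailw.simps)

lemma tail_step: "j \<le> h \<Longrightarrow> tailw G x l h j = x j [^] l j \<otimes> tailw G x l h (Suc j)"
  by (subst tailw.simps) simp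

lemma tail_gen:
  assumes "\<And>j. h < j \<Longrightarrow> P j" "\<And>j. j \<le> h \<Longrightarrow> P (Suc j) \<Longrightarrow> P j"
  shows "P j"
proof -
  have "\<forall>j. Suc h - j = d \<longrightarrow> P j" for d
  proof (induction d)
    case 0 then show ?case using assms(1) by auto
  next
    case (Suc d)
    show ?case
    proof (intro allI impI)
      fix j assume a: "Suc h - j = Suc d"
      then have "j \<le> h" "Suc h - Suc j = d" by arith+
      then show "P j" using Suc assms(2) by blast
    qed
  qed
  then show ?thesis by blast
qed

lemma tail_carrier: "\<forall>i\<in>{1..h}. x i \<in> carrier G \<Longrightarrow> 1 \<le> j \<Longrightarrow> tailw G x l h j \<in> carrier G"
  apply (induction j rule: tail_gen[where h=h])
   apply (simp add: tail_above)
  apply (simp add: tail_step)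
  done

lemma tail_cong: "(\<forall>i. j \<le> i \<and> i \<le> h \<longrightarrow> l i = l' i) \<Longrightarrow> tailw G x l h j = tailw G x l' h j"
  apply (induction j rule: tail_gen[where h=h])
   apply (simp add: tail_above)
  apply (simp add: tail_step)
  done

lemma tail_zero: "(\<forall>i. j \<le> i \<and> i \<le> h \<longrightarrow> l i = 0) \<Longrightarrow> tailw G x l h j = \<one>"
  apply (induction j rule: tail_gen[where h=h])
   apply (simp add: tail_above)
  apply (simp add: tail_step)
  done

lemma bw_carrier: "\<forall>i\<in>{1..n}. x i \<in> carrier G \<Longrightarrow> basis_word G x l n \<in> carrier G"
  by (induction n) auto

lemma bw_cong: "(\<forall>i. 1 \<le> i \<and> i \<le> n \<longrightarrow> l i = l' i) \<Longrightarrow> basis_word G x l n = basis_word G x l' n"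
  by (induction n) auto

lemma bw_zero: "(\<forall>i. 1 \<le> i \<and> i \<le> n \<longrightarrow> l i = 0) \<Longrightarrow> basis_word G x l n = \<one>"
  by (induction n) auto

lemma bw_split:
  assumes xG: "\<forall>i\<in>{1..h}. x i \<in> carrier G" and "j \<le> h"
  shows "basis_word G x l j \<otimes> tailw G x l h (Suc j) = basis_word G x l h"
  using assms(2)
proof (induction j rule: inc_induct)
  case base
  then show ?case using xG by (simp add: tail_above bw_carrier)
next
  case (step n)
  have "basis_word G x l n \<otimes> tailw G x l h (Suc n)
      = basis_word G x l n \<otimes> (x (Suc n) [^] l (Suc n) \<otimes> tailw G x l h (Suc (Suc n)))"
    using step by (simp add: tail_step)
  also have "\<dots> = basis_word G x l (Suc n) \<otimes> tailw G x l h (Suc (Suc n))"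
    using step xG by (simp add: m_assoc bw_carrier tail_carrier)
  finally show ?case using step by simp
qed

lemma decomp:
  assumes xG: "\<forall>i\<in>{1..h}. x i \<in> carrier G" and "j0 < h"
  shows "basis_word G x l h = basis_word G x l j0 \<otimes> x (Suc j0) [^] l (Suc j0) \<otimes> tailw G x l h (Suc (Suc j0))"
proof -
  have "basis_word G x l h = basis_word G x l j0 \<otimes> tailw G x l h (Suc j0)"
    using bw_split[OF xG] assms(2) by simp
  also have "\<dots> = basis_word G x l j0 \<otimes> x (Suc j0) [^] l (Suc j0) \<otimes> tailw G x l h (Suc (Suc j0))"
    using assms by (simp add: tail_step m_assoc bw_carrier tail_carrier)
  finally show ?thesis .
qed

lemma generate_empty: "generate G {} = {\<one>}"
proof
  show "generate G {} \<subseteq> {\<one>}"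
  proof
    fix t assume "t \<in> generate G {}" then show "t \<in> {\<one>}" by induction auto
  qed
qed (auto intro: generate.one)

lemma conj_generate:
  assumes A: "A \<subseteq> carrier G" and g: "g \<in> carrier G"
    and gen: "\<And>a. a \<in> A \<Longrightarrow> g \<otimes> a \<otimes> inv g \<in> generate G A"
    and t: "t \<in> generate G A"
  shows "g \<otimes> t \<otimes> inv g \<in> generate G A"
  using t
proof (induct t rule: generate.induct)
  case one thus ?case using g generate.one by auto
next
  case (incl h) thus ?case using gen by auto
next
  case (inv h)
  hence h: "h \<in> carrier G" using A by auto
  hence "inv (g \<otimes> h \<otimes> (inv g)) = g \<otimes> (inv h) \<otimes> (inv g)"
    using g by (simp add: inv_mult_group m_assoc)
  thus ?case
    using generate_m_inv_closed[OF A gen[OF inv]] by simp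
next
  case (eng h1 h2)
  note in_carrier = eng(1,3)[THEN generate_in_carrier[OF A]]
  have "g \<otimes> (h1 \<otimes> h2) \<otimes> inv g = (g \<otimes> h1 \<otimes> inv g) \<otimes> (g \<otimes> h2 \<otimes> inv g)"
    using in_carrier g by (simp add: inv_solve_left m_assoc)
  thus ?case
    using generate.eng[OF eng(2,4)] by simp
qed

lemma normal_by_gens:
  assumes A: "A \<subseteq> carrier G" and B: "B \<subseteq> carrier G" and genB: "generate G B = carrier G"
    and c1: "\<And>a b. a \<in> A \<Longrightarrow> b \<in> B \<Longrightarrow> b \<otimes> a \<otimes> inv b \<in> generate G A"
    and c2: "\<And>a b. a \<in> A \<Longrightarrow> b \<in> B \<Longrightarrow> inv b \<otimes> a \<otimes> b \<in> generate G A"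
  shows "generate G A \<lhd> G"
proof -
  let ?C = "{g\<in>carrier G. \<forall>t\<in>generate G A. g \<otimes> t \<otimes> inv g \<in> generate G A \<and> inv g \<otimes> t \<otimes> g \<in> generate G A}"
  have "generate G B \<subseteq> ?C"
  proof
    fix g assume "g \<in> generate G B"
    then show "g \<in> ?C"
    proof induction
      case one then show ?case using generate_in_carrier[OF A] by auto
    next
      case (incl b)
      then have b: "b \<in> carrier G" using B by auto
      show ?case using b conj_generate[OF A b c1[OF _ incl]]
          conj_generate[OF A inv_closed[OF b], of ] c2[OF _ incl] by auto
    next
      case (inv b)
      then have b: "b \<in> carrier G" using B by auto
      show ?case using b conj_generate[OF A b c1[OF _ inv]]
          conj_generate[OF A inv_closed[OF b], of ] c2[OF _ inv] by auto
    next
      case (eng g1 g2)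
      show ?case
      proof (intro CollectI conjI ballI)
        show "g1 \<otimes> g2 \<in> carrier G" using eng by auto
      next
        fix t assume t: "t \<in> generate G A"
        then have tc: "t \<in> carrier G" using generate_in_carrier[OF A] by auto
        have g: "g1 \<in> carrier G" "g2 \<in> carrier G" using eng by auto
        have "g1 \<otimes> g2 \<otimes> t \<otimes> inv (g1 \<otimes> g2) = g1 \<otimes> (g2 \<otimes> t \<otimes> inv g2) \<otimes> inv g1"
          using g tc by (simp add: inv_mult_group m_assoc)
        then show "g1 \<otimes> g2 \<otimes> t \<otimes> inv (g1 \<otimes> g2) \<in> generate G A" using eng t by auto
        have "inv (g1 \<otimes> g2) \<otimes> t \<otimes> (g1 \<otimes> g2) = inv g2 \<otimes> (inv g1 \<otimes> t \<otimes> g1) \<otimes> g2"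
          using g tc by (simp add: inv_mult_group m_assoc)
        then show "inv (g1 \<otimes> g2) \<otimes> t \<otimes> (g1 \<otimes> g2) \<in> generate G A" using eng t by auto
      qed
    qed
  qed
  then show ?thesis using genB
    by (intro normal_invI generate_is_subgroup A) auto
qed

end


context group begin

lemma cancel_l1: "y \<in> carrier G \<Longrightarrow> z \<in> carrier G \<Longrightarrow> inv y \<otimes> (y \<otimes> z) = z"
  by (metis inv_closed m_assoc l_inv l_one)

lemma cancel_l2: "y \<in> carrier G \<Longrightarrow> z \<in> carrier G \<Longrightarrow> y \<otimes> (inv y \<otimes> z) = z"
  by (metis inv_closed m_assoc r_inv l_one)

lemma gcomm_swap: "a \<in> carrier G \<Longrightarrow> b \<in> carrier G \<Longrightarrow> gcomm G b a = inv (gcomm G a b)"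
  by (simp add: gcomm_def inv_mult_group m_assoc)

lemma gcomm_self: "a \<in> carrier G \<Longrightarrow> gcomm G a a = \<one>"
  by (simp add: gcomm_def m_assoc[symmetric] inv_mult_group[symmetric])
     (simp add: m_assoc)

lemma conj_id1: "a \<in> carrier G \<Longrightarrow> b \<in> carrier G \<Longrightarrow> inv a \<otimes> b \<otimes> a = b \<otimes> gcomm G b a"
  by (simp add: gcomm_def m_assoc[symmetric])

lemma conj_id2: "a \<in> carrier G \<Longrightarrow> b \<in> carrier G \<Longrightarrow> c \<in> carrier G \<Longrightarrow> inv a \<otimes> b \<otimes> a = b \<otimes> c
   \<Longrightarrow> a \<otimes> b \<otimes> inv a = b \<otimes> inv (a \<otimes> c \<otimes> inv a)"
proof -
  assume a: "a \<in> carrier G" and b: "b \<in> carrier G" and c: "c \<in> carrier G" and e: "inv a \<otimes> b \<otimes> a = b \<otimes> c"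
  have "b = a \<otimes> (inv a \<otimes> b \<otimes> a) \<otimes> inv a" using a b by (simp add: m_assoc cancel_l2)
  also have "\<dots> = a \<otimes> b \<otimes> inv a \<otimes> (a \<otimes> c \<otimes> inv a)" using a b c e by (simp add: m_assoc) (metis inv_closed m_assoc l_inv l_one m_closed)
  finally have "b \<otimes> inv (a \<otimes> c \<otimes> inv a) = a \<otimes> b \<otimes> inv a" using a b c
    by (metis inv_closed inv_solve_right m_closed)
  then show ?thesis by simp
qed

lemma structK:
  assumes xG: "\<forall>i\<in>{1..h}. x i \<in> carrier G"
    and gen: "generate G (x ` {1..h}) = carrier G"
    and comm: "\<forall>i j. 1 \<le> i \<and> i < j \<and> j \<le> h \<longrightarrow>
                 gcomm G (x i) (x j) \<in> generate G (x ` {j+1..h})"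
    and j: "1 \<le> j" "j \<le> Suc h"
  shows "generate G (x ` {j..h}) \<lhd> G \<and> generate G (x ` {j..h}) = {tailw G x l h j | l. True}"
  using j(2,1)
proof (induction j rule: inc_induct)
  case base
  have "{tailw G x l h (Suc h) | l. True} = {\<one>}" by (simp add: tail_above)
  then show ?case using generate_empty one_is_normal by simp
next
  case (step n)
  let ?S = "\<lambda>j. generate G (x ` {j..h})"
  have n: "1 \<le> n" "n \<le> h" using step by auto
  have IH: "?S (Suc n) \<lhd> G" "?S (Suc n) = {tailw G x l h (Suc n) | l. True}" using step n by auto
  have sub: "?S (Suc n) \<subseteq> ?S n" by (rule mono_generate) auto
  have Ac: "x ` {j..h} \<subseteq> carrier G" if "1 \<le> j" for j using xG that by auto
  have xn: "x n \<in> carrier G" using xG n by auto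
  have Sc: "?S j \<subseteq> carrier G" if "1 \<le> j" for j using generate_incl[OF Ac[OF that]] .
  have xnS: "x n \<in> ?S n" using n by (auto intro: generate.incl)
  have norm: "?S n \<lhd> G"
  proof (rule normal_by_gens[OF Ac[OF n(1)] Ac[OF order_refl] gen])
    fix a b assume a: "a \<in> x ` {n..h}" and b: "b \<in> x ` {1..h}"
    then obtain k i where k: "a = x k" "k \<in> {n..h}" and i: "b = x i" "i \<in> {1..h}" by auto
    have bc: "b \<in> carrier G" using b xG by auto
    have "b \<otimes> a \<otimes> inv b \<in> ?S n \<and> inv b \<otimes> a \<otimes> b \<in> ?S n"
    proof (cases "k = n")
      case False
      then have "a \<in> ?S (Suc n)" using k by (auto intro: generate.incl)
      then have "b \<otimes> a \<otimes> inv b \<in> ?S (Suc n)" "inv b \<otimes> a \<otimes> b \<in> ?S (Suc n)"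
        using normal.inv_op_closed1[OF IH(1) bc] normal.inv_op_closed2[OF IH(1) bc] by auto
      then show ?thesis using sub by blast
    next
      case True
      have xi: "x i \<in> carrier G" using xG i by auto
      have cS: "gcomm G (x n) (x i) \<in> ?S (Suc n)"
      proof -
        consider "i < n" | "i = n" | "n < i" by arith
        then show ?thesis
        proof cases
          case 1
          then have "gcomm G (x i) (x n) \<in> ?S (Suc n)" using comm i n by auto
          then show ?thesis using gcomm_swap[OF xi xn] generate_m_inv_closed[OF Ac] by simp
        next
          case 2 then show ?thesis using gcomm_self[OF xn] generate.one by simp
        next
          case 3
          then have "gcomm G (x n) (x i) \<in> ?S (Suc i)" using comm i n by auto
          moreover have "?S (Suc i) \<subseteq> ?S (Suc n)" using 3 by (intro mono_generate) auto
          ultimately show ?thesis by auto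
        qed
      qed
      have cc: "gcomm G (x n) (x i) \<in> carrier G" using cS Sc by auto
      have e1: "inv (x i) \<otimes> x n \<otimes> x i = x n \<otimes> gcomm G (x n) (x i)" by (rule conj_id1[OF xi xn])
      note e2 = conj_id2[OF xi xn cc e1]
      have s1: "x n \<otimes> gcomm G (x n) (x i) \<in> ?S n"
        using generate.eng[OF xnS subsetD[OF sub cS]] .
      have cj: "x i \<otimes> gcomm G (x n) (x i) \<otimes> inv (x i) \<in> ?S (Suc n)"
        using normal.inv_op_closed2[OF IH(1) xi cS] .
      then have "inv (x i \<otimes> gcomm G (x n) (x i) \<otimes> inv (x i)) \<in> ?S n"
      proof -
        have AcS: "x ` {Suc n..h} \<subseteq> carrier G" using Ac n by auto
        from subsetD[OF sub generate_m_inv_closed[OF AcS cj]] show ?thesis .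
      qed
      then have s2: "x n \<otimes> inv (x i \<otimes> gcomm G (x n) (x i) \<otimes> inv (x i)) \<in> ?S n"
        by (rule generate.eng[OF xnS])
      show ?thesis using s1 s2 e1 e2 True k i by simp
    qed
    then show "b \<otimes> a \<otimes> inv b \<in> ?S n" "inv b \<otimes> a \<otimes> b \<in> ?S n" by auto
  qed
  let ?N = "\<lambda>j. {tailw G x l h j | l. True}"
  have Nchar: "?N n = {x n [^] (m::int) \<otimes> r | m r. r \<in> ?S (Suc n)}"
  proof
    show "?N n \<subseteq> {x n [^] (m::int) \<otimes> r | m r. r \<in> ?S (Suc n)}"
    proof clarify
      fix l show "\<exists>(m::int) r. tailw G x l h n = x n [^] m \<otimes> r \<and> r \<in> ?S (Suc n)"
      proof -
        have "tailw G x l h (Suc n) \<in> ?S (Suc n)" using IH(2) by auto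
        then show ?thesis using n tail_step[of n h x l] by blast
      qed
    qed
  next
    show "{x n [^] (m::int) \<otimes> r | m r. r \<in> ?S (Suc n)} \<subseteq> ?N n"
    proof clarify
      fix m r assume "r \<in> ?S (Suc n)"
      then obtain l where r: "r = tailw G x l h (Suc n)" using IH(2) by auto
      have "tailw G x (l(n := m)) h n = x n [^] m \<otimes> tailw G x (l(n := m)) h (Suc n)"
        using n by (simp add: tail_step)
      also have "tailw G x (l(n := m)) h (Suc n) = r" unfolding r by (rule tail_cong) auto
      finally show "\<exists>l'. x n [^] m \<otimes> r = tailw G x l' h n \<and> True" by metis
    qed
  qed
  have Nmem: "a \<in> ?N n \<longleftrightarrow> (\<exists>(m::int) r. a = x n [^] m \<otimes> r \<and> r \<in> ?S (Suc n))" for a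
    unfolding Nchar by blast
  have subN: "subgroup (?N n) G"
  proof (rule subgroupI)
    show "?N n \<subseteq> carrier G" using tail_carrier[OF xG] n by auto
    show "?N n \<noteq> {}" by auto
  next
    fix a assume "a \<in> ?N n"
    then obtain m r where a: "a = x n [^] (m::int) \<otimes> r" and r: "r \<in> ?S (Suc n)" using Nmem by blast
    have rc: "r \<in> carrier G" using r Sc n by auto
    have "inv a = x n [^] (-m) \<otimes> (x n [^] m \<otimes> inv r \<otimes> inv (x n [^] m))"
      using a rc xn by (simp add: int_pow_neg inv_mult_group m_assoc cancel_l1)
    moreover have "x n [^] m \<otimes> inv r \<otimes> inv (x n [^] m) \<in> ?S (Suc n)"
      using normal.inv_op_closed2[OF IH(1) _ generate_m_inv_closed[OF Ac r]] xn n by auto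
    ultimately show "inv a \<in> ?N n" using Nmem by blast
  next
    fix a b assume "a \<in> ?N n" "b \<in> ?N n"
    then obtain m r m' r' where a: "a = x n [^] (m::int) \<otimes> r" and r: "r \<in> ?S (Suc n)"
      and b: "b = x n [^] (m'::int) \<otimes> r'" and r': "r' \<in> ?S (Suc n)" using Nmem by blast
    have rc: "r \<in> carrier G" "r' \<in> carrier G" using r r' Sc n by auto
    have "a \<otimes> b = x n [^] (m + m') \<otimes> ((inv (x n [^] m') \<otimes> r \<otimes> x n [^] m') \<otimes> r')"
      using a b rc xn by (simp add: int_pow_mult m_assoc) (simp add: cancel_l2)
    moreover have "(inv (x n [^] m') \<otimes> r \<otimes> x n [^] m') \<otimes> r' \<in> ?S (Suc n)"
    proof -
      have "inv (x n [^] m') \<otimes> r \<otimes> x n [^] m' \<in> ?S (Suc n)"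
        by (rule normal.inv_op_closed1[OF IH(1) _ r]) (simp add: xn)
      then show ?thesis by (rule generate.eng[OF _ r'])
    qed
    ultimately show "a \<otimes> b \<in> ?N n" using Nmem by blast
  qed
  have "?S n \<subseteq> ?N n"
  proof (rule generate_subgroup_incl[OF _ subN])
    show "x ` {n..h} \<subseteq> ?N n"
    proof
      fix a assume "a \<in> x ` {n..h}"
      then obtain k where k: "a = x k" "k \<in> {n..h}" by auto
      show "a \<in> ?N n"
      proof (cases "k = n")
        case True
        then have "a = x n [^] (1::int) \<otimes> \<one>" using k xn by simp
        then show ?thesis using Nmem[of a] generate.one[of G "x ` {Suc n..h}"] by blast
      next
        case False
        then have "a \<in> ?S (Suc n)" using k by (auto intro: generate.incl)
        moreover have "a = x n [^] (0::int) \<otimes> a" using k xG n by auto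
        ultimately show ?thesis using Nmem by blast
      qed
    qed
  qed
  moreover have "?N n \<subseteq> ?S n"
  proof
    fix a assume "a \<in> ?N n"
    then obtain m r where a: "a = x n [^] (m::int) \<otimes> r" and r: "r \<in> ?S (Suc n)" using Nmem by blast
    have "x n [^] m \<in> ?S n" using subgroup_int_pow_closed[OF generate_is_subgroup[OF Ac[OF n(1)]] xnS] .
    then show "a \<in> ?S n" using generate.eng[OF _ subsetD[OF sub r]] a by simp
  qed
  ultimately have "?S n = ?N n" by (rule equalityI)
  then show ?case using norm by simp
qed

end


context group begin

lemma compose:
  assumes xG: "\<forall>i\<in>{1..h}. x i \<in> carrier G" and j0: "j0 < h"
    and r: "r \<in> {tailw G x l h (Suc (Suc j0)) | l. True}"
  shows "\<exists>k'. basis_word G x k j0 \<otimes> x (Suc j0) [^] (m::int) \<otimes> r = basis_word G x k' h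
           \<and> (\<forall>i. i \<le> j0 \<longrightarrow> k' i = k i) \<and> k' (Suc j0) = m"
proof -
  obtain l where l: "r = tailw G x l h (Suc (Suc j0))" using r by auto
  define k' where "k' = (\<lambda>i. if i \<le> j0 then k i else if i = Suc j0 then m else l i)"
  have "basis_word G x k' h = basis_word G x k' j0 \<otimes> x (Suc j0) [^] k' (Suc j0) \<otimes> tailw G x k' h (Suc (Suc j0))"
    by (rule decomp[OF xG j0])
  also have "basis_word G x k' j0 = basis_word G x k j0" by (rule bw_cong) (simp add: k'_def)
  also have "tailw G x k' h (Suc (Suc j0)) = r" unfolding l by (rule tail_cong) (simp add: k'_def)
  finally show ?thesis by (intro exI[of _ k']) (simp add: k'_def)
qed

lemma main_thm:
  fixes h :: nat and x :: "nat \<Rightarrow> 'a" and q :: "nat \<Rightarrow> int"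
  assumes xG: "\<forall>i\<in>{1..h}. x i \<in> carrier G"
    and gen: "generate G (x ` {1..h}) = carrier G"
    and ex_rep: "\<forall>g\<in>carrier G. \<exists>l. g = basis_word G x l h"
    and uniq_rep: "\<forall>l l'. basis_word G x l h = basis_word G x l' h \<longrightarrow> (\<forall>i\<in>{1..h}. l i = l' i)"
    and comm: "\<forall>i j. 1 \<le> i \<and> i < j \<and> j \<le> h \<longrightarrow>
                 gcomm G (x i) (x j) \<in> generate G (x ` {j+1..h})"
    and qpos: "\<forall>i\<in>{1..h}. q i > 0"
    and Hsub: "subgroup {basis_word G x (\<lambda>i. q i * l i) h | l. True} G"
  shows "\<forall>g\<in>carrier G. \<exists>!y. y \<in> {basis_word G x k h | k. \<forall>i\<in>{1..h}. 0 \<le> k i \<and> k i < q i}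
            \<and> y \<in> g <# {basis_word G x (\<lambda>i. q i * l i) h | l. True}"
proof
  fix g assume g: "g \<in> carrier G"
  let ?Hs = "{basis_word G x (\<lambda>i. q i * l i) h | l. True}"
  let ?S = "\<lambda>j. generate G (x ` {j..h})"
  have K: "?S j \<lhd> G \<and> ?S j = {tailw G x l h j | l. True}" if "1 \<le> j" "j \<le> Suc h" for j
    using structK[OF xG gen comm that] .
  have Hc: "?Hs \<subseteq> carrier G" using subgroup.subset[OF Hsub] .
  have claim: "\<exists>\<eta>\<in>?Hs. \<exists>k. g \<otimes> \<eta> = basis_word G x k h \<and> (\<forall>i. 1 \<le> i \<and> i \<le> j0 \<longrightarrow> 0 \<le> k i \<and> k i < q i)"
    if "j0 \<le> h" for j0
    using that
  proof (induction j0)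
    case 0
    obtain l where "g = basis_word G x l h" using ex_rep g by auto
    then show ?case using subgroup.one_closed[OF Hsub] g by (intro bexI[of _ \<one>]) auto
  next
    case (Suc j0)
    then have j0: "j0 < h" by simp
    from Suc obtain \<eta> k where eta: "\<eta> \<in> ?Hs" and gk: "g \<otimes> \<eta> = basis_word G x k h"
      and rng: "\<forall>i. 1 \<le> i \<and> i \<le> j0 \<longrightarrow> 0 \<le> k i \<and> k i < q i" by auto
    define c where "c = k (Suc j0)"
    define qj where "qj = q (Suc j0)"
    define m where "m = c div qj"
    define xj where "xj = x (Suc j0)"
    define p where "p = basis_word G x k j0"
    define r where "r = tailw G x k h (Suc (Suc j0))"
    define Y where "Y = xj [^] (qj * m)"
    have qj: "qj > 0" using qpos j0 by (simp add: qj_def)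
    have xj: "xj \<in> carrier G" using xG j0 by (simp add: xj_def)
    have pc: "p \<in> carrier G" unfolding p_def using xG j0 by (intro bw_carrier) auto
    have KS: "?S (Suc (Suc j0)) \<lhd> G" "?S (Suc (Suc j0)) = {tailw G x l h (Suc (Suc j0)) | l. True}"
      using K[of "Suc (Suc j0)"] j0 by auto
    have rS: "r \<in> ?S (Suc (Suc j0))" unfolding r_def KS(2) by auto
    have rc: "r \<in> carrier G" using rS normal_imp_subgroup[OF KS(1)] subgroup.subset by blast
    have Yc: "Y \<in> carrier G" using xj by (simp add: Y_def)
    have Wk: "basis_word G x k h = p \<otimes> xj [^] c \<otimes> r"
      unfolding p_def xj_def c_def r_def by (rule decomp[OF xG j0])
    define l0 where "l0 = (\<lambda>i. if i = Suc j0 then - m else 0)"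
    have "basis_word G x (\<lambda>i. q i * l0 i) h = basis_word G x (\<lambda>i. q i * l0 i) j0 \<otimes> x (Suc j0) [^] (q (Suc j0) * l0 (Suc j0)) \<otimes> tailw G x (\<lambda>i. q i * l0 i) h (Suc (Suc j0))"
      by (rule decomp[OF xG j0])
    also have "basis_word G x (\<lambda>i. q i * l0 i) j0 = \<one>" by (rule bw_zero) (simp add: l0_def)
    also have "tailw G x (\<lambda>i. q i * l0 i) h (Suc (Suc j0)) = \<one>" by (rule tail_zero) (simp add: l0_def)
    finally have "basis_word G x (\<lambda>i. q i * l0 i) h = inv Y"
      using xj by (simp add: l0_def Y_def qj_def xj_def int_pow_neg[symmetric])
    then have eta': "inv Y \<in> ?Hs" unfolding mem_Collect_eq by (intro exI[of _ l0]) simp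
    define t where "t = Y \<otimes> r \<otimes> inv Y"
    have tS: "t \<in> ?S (Suc (Suc j0))" unfolding t_def using normal.inv_op_closed2[OF KS(1) Yc rS] .
    have cm: "c - qj * m = c mod qj" unfolding m_def by (simp add: minus_mult_div_eq_mod)
    have xc: "xj [^] c \<otimes> inv Y = xj [^] (c mod qj)"
      using xj unfolding Y_def cm[symmetric] by (simp add: int_pow_diff)
    have "g \<otimes> (\<eta> \<otimes> inv Y) = p \<otimes> xj [^] c \<otimes> r \<otimes> inv Y"
      using g Yc eta Hc gk Wk by (simp add: m_assoc[symmetric] subsetD)
    also have "\<dots> = p \<otimes> (xj [^] c \<otimes> inv Y) \<otimes> t"
      unfolding t_def using pc xj Yc rc by (simp add: m_assoc cancel_l1)
    also have "\<dots> = p \<otimes> xj [^] (c mod qj) \<otimes> t" by (simp only: xc)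
    finally have e: "g \<otimes> (\<eta> \<otimes> inv Y) = p \<otimes> xj [^] (c mod qj) \<otimes> t" .
    obtain k' where k': "p \<otimes> xj [^] (c mod qj) \<otimes> t = basis_word G x k' h"
        "\<forall>i. i \<le> j0 \<longrightarrow> k' i = k i" "k' (Suc j0) = c mod qj"
      using compose[OF xG j0, of t k "c mod qj"] tS KS(2) unfolding p_def xj_def by auto
    have rng': "\<forall>i. 1 \<le> i \<and> i \<le> Suc j0 \<longrightarrow> 0 \<le> k' i \<and> k' i < q i"
    proof (intro allI impI)
      fix i assume i: "1 \<le> i \<and> i \<le> Suc j0"
      show "0 \<le> k' i \<and> k' i < q i"
      proof (cases "i = Suc j0")
        case True then show ?thesis using k'(3) qj by (simp add: qj_def)
      next
        case False then show ?thesis using i k'(2) rng by auto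
      qed
    qed
    have "\<eta> \<otimes> inv Y \<in> ?Hs" using subgroup.m_closed[OF Hsub eta eta'] .
    moreover have "g \<otimes> (\<eta> \<otimes> inv Y) = basis_word G x k' h" using e k'(1) by simp
    ultimately show ?case using rng' by (intro bexI[of _ "\<eta> \<otimes> inv Y"] exI[of _ k']) auto
  qed
  obtain \<eta> k where eta: "\<eta> \<in> ?Hs" and gk: "g \<otimes> \<eta> = basis_word G x k h"
      and rng: "\<forall>i. 1 \<le> i \<and> i \<le> h \<longrightarrow> 0 \<le> k i \<and> k i < q i" using claim[OF order_refl] by blast
  show "\<exists>!y. y \<in> {basis_word G x k h | k. \<forall>i\<in>{1..h}. 0 \<le> k i \<and> k i < q i} \<and> y \<in> g <# ?Hs"
  proof (rule ex1I[of _ "g \<otimes> \<eta>"])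
    show "g \<otimes> \<eta> \<in> {basis_word G x k h | k. \<forall>i\<in>{1..h}. 0 \<le> k i \<and> k i < q i} \<and> g \<otimes> \<eta> \<in> g <# ?Hs"
      using gk rng eta unfolding l_coset_def by auto
  next
    fix y assume y: "y \<in> {basis_word G x k h | k. \<forall>i\<in>{1..h}. 0 \<le> k i \<and> k i < q i} \<and> y \<in> g <# ?Hs"
    obtain k2 where yk: "y = basis_word G x k2 h" and rng2: "\<forall>i\<in>{1..h}. 0 \<le> k2 i \<and> k2 i < q i"
      using conjunct1[OF y] by blast
    obtain \<eta>2 where eta2: "\<eta>2 \<in> ?Hs" and yg: "y = g \<otimes> \<eta>2" using conjunct2[OF y] unfolding l_coset_def by blast
    show "y = g \<otimes> \<eta>"
    proof (rule ccontr)
      assume ne: "y \<noteq> g \<otimes> \<eta>"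
      let ?P = "\<lambda>i. 1 \<le> i \<and> i \<le> h \<and> k i \<noteq> k2 i"
      have "\<exists>i. ?P i"
      proof (rule ccontr)
        assume "\<not> (\<exists>i. ?P i)"
        then have "basis_word G x k h = basis_word G x k2 h" by (intro bw_cong) auto
        then show False using ne gk yk by simp
      qed
      then have "\<exists>j. ?P j \<and> (\<forall>i<j. \<not> ?P i)" by (rule exists_least_iff[THEN iffD1])
      then obtain j where Pj: "?P j" and minj: "\<forall>i<j. \<not> ?P i" by blast
      then obtain j0 where jj: "j = Suc j0" by (cases j) auto
      have j0: "j0 < h" using Pj jj by simp
      define xj where "xj = x (Suc j0)"
      define a where "a = k (Suc j0)"
      define b where "b = k2 (Suc j0)"
      define p where "p = basis_word G x k j0"
      define r1 where "r1 = tailw G x k h (Suc (Suc j0))"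
      define r2 where "r2 = tailw G x k2 h (Suc (Suc j0))"
      define D where "D = xj [^] (- a + b)"
      have xj: "xj \<in> carrier G" using xG j0 by (simp add: xj_def)
      have pc: "p \<in> carrier G" unfolding p_def using xG j0 by (intro bw_carrier) auto
      have p2: "basis_word G x k2 j0 = p" unfolding p_def
        using minj jj by (intro bw_cong) (metis Suc_le_lessD le_trans less_imp_le_nat j0 less_Suc_eq_le)
      have KS: "?S (Suc (Suc j0)) \<lhd> G" "?S (Suc (Suc j0)) = {tailw G x l h (Suc (Suc j0)) | l. True}"
        using K[of "Suc (Suc j0)"] j0 by auto
      have r1S: "r1 \<in> ?S (Suc (Suc j0))" unfolding r1_def KS(2) by auto
      have r2S: "r2 \<in> ?S (Suc (Suc j0))" unfolding r2_def KS(2) by auto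
      have SG: "subgroup (?S (Suc (Suc j0))) G" using normal_imp_subgroup[OF KS(1)] .
      have r1c: "r1 \<in> carrier G" using r1S SG subgroup.subset by blast
      have r2c: "r2 \<in> carrier G" using r2S SG subgroup.subset by blast
      have Dc: "D \<in> carrier G" using xj by (simp add: D_def)
      have W1: "g \<otimes> \<eta> = p \<otimes> xj [^] a \<otimes> r1"
        unfolding gk p_def xj_def a_def r1_def by (rule decomp[OF xG j0])
      have W2: "y = p \<otimes> xj [^] b \<otimes> r2"
        unfolding yk p2[symmetric] xj_def b_def r2_def by (rule decomp[OF xG j0])
      define s where "s = inv D \<otimes> inv r1 \<otimes> D \<otimes> r2"
      have "inv D \<otimes> inv r1 \<otimes> D \<in> ?S (Suc (Suc j0))"
        using normal.inv_op_closed1[OF KS(1) Dc subgroup.m_inv_closed[OF SG r1S]] .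
      then have sS: "s \<in> ?S (Suc (Suc j0))" unfolding s_def by (rule subgroup.m_closed[OF SG _ r2S])
      have Dsplit: "D = inv (xj [^] a) \<otimes> xj [^] b" unfolding D_def using xj
        by (simp only: int_pow_mult[OF xj] int_pow_neg[OF xj])
      have "inv (g \<otimes> \<eta>) \<otimes> y = inv r1 \<otimes> (inv (xj [^] a) \<otimes> (xj [^] b \<otimes> r2))"
        unfolding W1 W2 using pc xj r1c r2c by (simp add: inv_mult_group m_assoc cancel_l1)
      also have "\<dots> = \<one> \<otimes> D \<otimes> s"
        unfolding s_def Dsplit using xj r1c r2c by (simp add: inv_mult_group m_assoc cancel_l1 cancel_l2)
      finally have e: "inv (g \<otimes> \<eta>) \<otimes> y = basis_word G x (\<lambda>_. 0) j0 \<otimes> xj [^] (- a + b) \<otimes> s"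
        by (simp add: D_def bw_zero)
      obtain k' where k': "basis_word G x (\<lambda>_. 0) j0 \<otimes> xj [^] (- a + b) \<otimes> s = basis_word G x k' h"
          "k' (Suc j0) = - a + b"
        using compose[OF xG j0, of s "\<lambda>_. 0" "- a + b"] sS KS(2) unfolding xj_def by auto
      have etac: "\<eta> \<in> carrier G" "\<eta>2 \<in> carrier G" using eta eta2 Hc by auto
      have "inv (g \<otimes> \<eta>) \<otimes> y = inv \<eta> \<otimes> \<eta>2"
        unfolding yg using g etac by (simp add: inv_mult_group m_assoc cancel_l1)
      moreover have "inv \<eta> \<otimes> \<eta>2 \<in> ?Hs"
        using subgroup.m_closed[OF Hsub subgroup.m_inv_closed[OF Hsub eta] eta2] .
      moreover obtain L where "inv \<eta> \<otimes> \<eta>2 = basis_word G x (\<lambda>i. q i * L i) h"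
        using calculation(2) by blast
      ultimately have L: "inv (g \<otimes> \<eta>) \<otimes> y = basis_word G x (\<lambda>i. q i * L i) h" by simp
      then have "basis_word G x k' h = basis_word G x (\<lambda>i. q i * L i) h" using e k'(1) by simp
      then have "\<forall>i\<in>{1..h}. k' i = q i * L i" using uniq_rep by blast
      then have "k' (Suc j0) = q (Suc j0) * L (Suc j0)" using j0 by simp
      then have dv: "q (Suc j0) dvd (b - a)" using k'(2) by simp
      have "0 \<le> a" "a < q (Suc j0)" using rng j0 unfolding a_def by auto
      moreover have "0 \<le> b" "b < q (Suc j0)" using rng2 j0 unfolding b_def by auto
      ultimately have "\<bar>b - a\<bar> < \<bar>q (Suc j0)\<bar>" by auto
      then have "b - a = 0"
      proof -
        assume lt: "\<bar>b - a\<bar> < \<bar>q (Suc j0)\<bar>"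
        show "b - a = 0"
        proof (rule ccontr)
          assume "b - a \<noteq> 0"
          from dvd_imp_le_int[OF this dv] lt show False by linarith
        qed
      qed
      then show False using Pj jj unfolding a_def b_def by simp
    qed
  qed
qed

end

theorem lemma5p5:
  fixes G :: "('a, 'b) monoid_scheme"
    and h :: nat and x :: "nat \<Rightarrow> 'a" and q :: "nat \<Rightarrow> int"
  assumes grp: "group G"
    and nil: "nilpotent_group G"
    and tf: "torsion_free G"
    and hl: "hirsch_length G h"
    and xG: "\<forall>i\<in>{1..h}. x i \<in> carrier G"
    and gen: "generate G (x ` {1..h}) = carrier G"
    and ex_rep: "\<forall>g\<in>carrier G. \<exists>l. g = basis_word G x l h"
    and uniq_rep: "\<forall>l l'. basis_word G x l h = basis_word G x l' h \<longrightarrow> (\<forall>i\<in>{1..h}. l i = l' i)"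
    and comm: "\<forall>i j. 1 \<le> i \<and> i < j \<and> j \<le> h \<longrightarrow>
                 gcomm G (x i) (x j) \<in> generate G (x ` {j+1..h})"
    and qpos: "\<forall>i\<in>{1..h}. q i > 0"
    and Hsub: "subgroup {basis_word G x (\<lambda>i. q i * l i) h | l. True} G"
  shows "\<forall>g\<in>carrier G. \<exists>!y. y \<in> {basis_word G x k h | k. \<forall>i\<in>{1..h}. 0 \<le> k i \<and> k i < q i}
            \<and> y \<in> g <#\<^bsub>G\<^esub> {basis_word G x (\<lambda>i. q i * l i) h | l. True}"
  using group.main_thm[OF grp xG gen ex_rep uniq_rep comm qpos Hsub] .

end
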